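(* Let $\chi\in C_0^\infty(\mathbb R)$ be even, supported in $(-2,2)$ and equal to $1$ on $[-1,1]$, let $\varphi_1(x,\xi)=x\xi+|\xi|$, $\varphi_2(x,\eta)=x\eta$, and define on $\mathbb R$ $$T(f,g)(x)=\iint\chi(x)\widehat f(\xi)\widehat g(\eta)e^{i\varphi_1(x,\xi)+i\varphi_2(x,\eta)}\frac{d\xi\,d\eta}{(2\pi)^2}.$$ Then for every $1<p<\infty$, $T$ is not bounded from $L^\infty(\mathbb R)\times L^p(\mathbb R)$ to $L^p(\mathbb R)$.
   Context: $\widehat f(\xi)=\int f(x)e^{-ix\xi}dx$. The amplitude $\sigma(x,\xi,\eta)=\chi(x)$ belongs to $S^0_{1,0}(1,2)$. *)

theory Defs
  imports "HOL-Analysis.Analysis"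
begin

fun cderiv :: "nat \<Rightarrow> (real \<Rightarrow> complex) \<Rightarrow> real \<Rightarrow> complex" where
  "cderiv 0 f = f"
| "cderiv (Suc n) f = (\<lambda>x. vector_derivative (cderiv n f) (at x))"

definition schwartz :: "(real \<Rightarrow> complex) \<Rightarrow> bool" where
  "schwartz f \<longleftrightarrow> (\<forall>n x. cderiv n f differentiable (at x)) \<and>
     (\<forall>n k. \<exists>B. \<forall>x. \<bar>x\<bar> ^ k * norm (cderiv n f x) \<le> B)"

definition smooth_real :: "(real \<Rightarrow> real) \<Rightarrow> bool" where
  "smooth_real h \<longleftrightarrow> (\<forall>n x. ((deriv ^^ n) h) differentiable (at x))"

definition fourier :: "(real \<Rightarrow> complex) \<Rightarrow> real \<Rightarrow> complex" where
  "fourier f \<xi> = (LINT x|lborel. f x * cis (- x * \<xi>))"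

definition Lp_norm :: "real \<Rightarrow> (real \<Rightarrow> complex) \<Rightarrow> real" where
  "Lp_norm p h = (LINT x|lborel. norm (h x) powr p) powr (1 / p)"

definition sup_norm :: "(real \<Rightarrow> complex) \<Rightarrow> real" where
  "sup_norm h = (SUP x. norm (h x))"

definition T_op :: "(real \<Rightarrow> real) \<Rightarrow> (real \<Rightarrow> complex) \<Rightarrow> (real \<Rightarrow> complex) \<Rightarrow> real \<Rightarrow> complex" where
  "T_op chi f g x = (LINT \<xi>|lborel. LINT \<eta>|lborel.
      complex_of_real (chi x) * fourier f \<xi> * fourier g \<eta>
      * cis ((x * \<xi> + \<bar>\<xi>\<bar>) + x * \<eta>) / (2 * pi)\<^sup>2)"

end

theory Submission
  imports Defs "HOL-Probability.Probability" "HOL-Computational_Algebra.Polynomial"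
begin


lemma gauss_std_ft:
  "(LINT x|lborel. complex_of_real (exp (- x\<^sup>2 / 2)) * cis (t * x)) = complex_of_real (sqrt (2*pi) * exp (- t\<^sup>2 / 2))"
proof -
  have pw: "std_normal_density x *\<^sub>R iexp (t * x) = complex_of_real (exp (- x\<^sup>2 / 2)) * cis (t * x) / complex_of_real (sqrt (2*pi))" for x
    by (simp add: std_normal_density_def cis_conv_exp scaleR_conv_of_real)
  have "char std_normal_distribution t = (LINT x|lborel. std_normal_density x *\<^sub>R iexp (t * x))"
    unfolding char_def by (subst integral_density) (auto simp: normal_density_nonneg)
  also have "\<dots> = (LINT x|lborel. complex_of_real (exp (- x\<^sup>2 / 2)) * cis (t * x)) / complex_of_real (sqrt (2*pi))"
    unfolding pw by (rule integral_divide_zero)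
  finally have "(LINT x|lborel. complex_of_real (exp (- x\<^sup>2 / 2)) * cis (t * x)) = complex_of_real (sqrt (2*pi)) * char std_normal_distribution t"
    by (simp add: field_simps)
  then show ?thesis using char_std_normal_distribution by simp
qed

lemma integrable_gauss_std: "integrable lborel (\<lambda>x::real. exp (- x\<^sup>2 / 2))"
proof -
  have "integrable lborel (\<lambda>x. sqrt (2*pi) * (std_normal_density x * x^0))"
    using integrable_std_normal_moment[of 0] by (rule integrable_mult_right)
  then show ?thesis by (simp add: std_normal_density_def)
qed

lemma integrable_gauss_std_cis: "integrable lborel (\<lambda>x::real. complex_of_real (exp (- x\<^sup>2 / 2)) * cis (t * x))"
  by (rule Bochner_Integration.integrable_bound[OF integrable_gauss_std]) (auto simp: norm_mult intro!: borel_measurable_continuous_onI continuous_intros)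

lemma integrable_gauss:
  fixes s c :: real assumes s: "s > 0"
  shows "integrable lborel (\<lambda>y::real. exp (- (y - c)\<^sup>2 / (2 * s\<^sup>2)))"
proof -
  have "integrable lborel (\<lambda>x. exp (- ((x - c) / s)\<^sup>2 / 2))"
    using lborel_integrable_real_affine[OF integrable_gauss_std, of "1/s" "- c/s"] s
    by (simp add: diff_divide_distrib add.commute)
  then show ?thesis using s by (simp add: power_divide mult.commute)
qed

lemma integrable_gauss_cis:
  assumes s: "s > 0"
  shows "integrable lborel (\<lambda>y. complex_of_real (exp (- (y - c)\<^sup>2 / (2 * s\<^sup>2))) * cis (a * y))"
  using s by (intro Bochner_Integration.integrable_bound[OF integrable_gauss[OF s, of c]]) (auto simp: norm_mult intro!: borel_measurable_continuous_onI continuous_intros)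

lemma gauss_ft:
  assumes s: "s > 0"
  shows "(LINT y|lborel. complex_of_real (exp (- (y - c)\<^sup>2 / (2 * s\<^sup>2))) * cis (- y * \<xi>))
       = complex_of_real (s * sqrt (2*pi) * exp (- s\<^sup>2 * \<xi>\<^sup>2 / 2)) * cis (- c * \<xi>)"
proof -
  have "(LINT y|lborel. complex_of_real (exp (- (y - c)\<^sup>2 / (2 * s\<^sup>2))) * cis (- y * \<xi>))
      = \<bar>s\<bar> *\<^sub>R (LINT x|lborel. complex_of_real (exp (- (c + s * x - c)\<^sup>2 / (2 * s\<^sup>2))) * cis (- (c + s * x) * \<xi>))"
    using s by (intro lborel_integral_real_affine) simp
  also have "(\<lambda>x. complex_of_real (exp (- (c + s * x - c)\<^sup>2 / (2 * s\<^sup>2))) * cis (- (c + s * x) * \<xi>))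
      = (\<lambda>x. cis (- c * \<xi>) * (complex_of_real (exp (- x\<^sup>2 / 2)) * cis ((- s * \<xi>) * x)))"
  proof
    fix x
    have e: "(c + s * x - c)\<^sup>2 / (2 * s\<^sup>2) = x\<^sup>2 / 2" using s by (simp add: power_mult_distrib)
    have f: "cis (- (c + s * x) * \<xi>) = cis (- c * \<xi>) * cis ((- s * \<xi>) * x)"
      by (simp add: cis_mult algebra_simps)
    show "complex_of_real (exp (- (c + s * x - c)\<^sup>2 / (2 * s\<^sup>2))) * cis (- (c + s * x) * \<xi>)
      = cis (- c * \<xi>) * (complex_of_real (exp (- x\<^sup>2 / 2)) * cis ((- s * \<xi>) * x))"
      unfolding f using e by (simp only: minus_divide_left[symmetric]) simp
  qed
  also have "(LINT x|lborel. cis (- c * \<xi>) * (complex_of_real (exp (- x\<^sup>2 / 2)) * cis ((- s * \<xi>) * x)))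
      = cis (- c * \<xi>) * complex_of_real (sqrt (2*pi) * exp (- (- s * \<xi>)\<^sup>2 / 2))"
    by (simp only: integral_mult_right_zero gauss_std_ft)
  finally show ?thesis using s by (simp add: scaleR_conv_of_real power_mult_distrib mult_ac)
qed



lemma pow_le_exp: fixes t :: real assumes "t \<ge> 0" shows "t ^ n \<le> real n ^ n * exp t"
proof (cases "n = 0")
  case True then show ?thesis using assms by simp
next
  case False
  then have n: "real n > 0" by simp
  have "t / n \<le> exp (t / n)" using exp_ge_add_one_self[of "t/n"] by linarith
  then have "(t / n) ^ n \<le> exp (t / n) ^ n" using assms n by (intro power_mono) auto
  also have "\<dots> = exp t" using n by (simp add: exp_of_nat_mult[symmetric])
  finally have "t ^ n / real n ^ n \<le> exp t" by (simp add: power_divide)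
  then show ?thesis using n by (simp add: field_simps)
qed

lemma gauss_decay:
  fixes a c :: real assumes a: "a > 0"
  shows "\<exists>B. \<forall>y::real. \<bar>y\<bar> ^ m * exp (- a * y\<^sup>2 + c * y) \<le> B"
proof -
  define B where "B = exp (c\<^sup>2 / (2 * a)) * (1 + (2 / a) ^ m * real m ^ m)"
  have "\<bar>y\<bar> ^ m * exp (- a * y\<^sup>2 + c * y) \<le> B" for y
  proof -
    have e1: "- a * y\<^sup>2 + c * y \<le> - (a * y\<^sup>2 / 2) + c\<^sup>2 / (2 * a)"
    proof -
      have "0 \<le> (a * y - c)\<^sup>2" by simp
      then have "0 \<le> a\<^sup>2 * y\<^sup>2 - 2 * a * c * y + c\<^sup>2" by (simp add: power2_eq_square algebra_simps)
      then have "0 \<le> (a\<^sup>2 * y\<^sup>2 - 2 * a * c * y + c\<^sup>2) / (2 * a)" using a by simp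
      then show ?thesis using a by (simp add: field_simps power2_eq_square)
    qed
    define t where "t = a * y\<^sup>2 / 2"
    have t0: "t \<ge> 0" using a by (simp add: t_def)
    have "\<bar>y\<bar> ^ m \<le> 1 + (y\<^sup>2) ^ m"
    proof (cases "\<bar>y\<bar> \<le> 1")
      case True then have "\<bar>y\<bar> ^ m \<le> 1" by (simp add: power_le_one)
      moreover have "0 \<le> (y\<^sup>2) ^ m" by (metis zero_le_power zero_le_power2)
      ultimately show ?thesis by linarith
    next
      case False
      then have "1 \<le> \<bar>y\<bar> ^ m" by (simp add: one_le_power)
      then have "\<bar>y\<bar> ^ m \<le> (\<bar>y\<bar> ^ m) ^ 2" unfolding power2_eq_square
        using mult_left_mono[of 1 "\<bar>y\<bar> ^ m" "\<bar>y\<bar> ^ m"] by simp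
      also have "\<dots> = (y\<^sup>2) ^ m" by (simp add: power_mult_distrib[symmetric] power_mult[symmetric] mult.commute power_even_abs)
      finally show ?thesis by simp
    qed
    also have "(y\<^sup>2) ^ m = (2 / a) ^ m * t ^ m" using a by (simp add: t_def power_mult_distrib[symmetric])
    also have "t ^ m \<le> real m ^ m * exp t" by (rule pow_le_exp[OF t0])
    finally have 1: "\<bar>y\<bar> ^ m \<le> 1 + (2 / a) ^ m * (real m ^ m * exp t)"
      using a by (smt (verit) mult_left_mono zero_le_divide_iff zero_le_power)
    have "\<bar>y\<bar> ^ m * exp (- a * y\<^sup>2 + c * y) \<le> \<bar>y\<bar> ^ m * (exp (c\<^sup>2 / (2 * a)) * exp (- t))"
      using e1 by (intro mult_left_mono) (auto simp: t_def exp_add[symmetric])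
    also have "\<dots> \<le> (1 + (2 / a) ^ m * (real m ^ m * exp t)) * (exp (c\<^sup>2 / (2 * a)) * exp (- t))"
      by (intro mult_right_mono 1) auto
    also have "\<dots> = exp (c\<^sup>2 / (2 * a)) * (exp (- t) + (2 / a) ^ m * real m ^ m)"
      by (simp add: algebra_simps exp_minus field_simps)
    also have "\<dots> \<le> B" unfolding B_def using t0 by (intro mult_left_mono) auto
    finally show ?thesis .
  qed
  then show ?thesis by blast
qed

definition Hq :: "complex poly \<Rightarrow> real \<Rightarrow> real \<Rightarrow> real \<Rightarrow> complex \<Rightarrow> complex" where
  "Hq P a c b z = poly P z * exp (- of_real a * z\<^sup>2 + (of_real c + \<i> * of_real b) * z)"

definition Dq :: "real \<Rightarrow> real \<Rightarrow> real \<Rightarrow> complex poly \<Rightarrow> complex poly" where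
  "Dq a c b P = pderiv P + P * [:of_real c + \<i> * of_real b, - 2 * of_real a:]"

lemma Hq_deriv: "(Hq P a c b has_field_derivative Hq (Dq a c b P) a c b z) (at z)"
  unfolding Hq_def Dq_def
  by (auto intro!: derivative_eq_intros poly_DERIV simp: algebra_simps power2_eq_square)

lemma Q_vderiv: "((\<lambda>y. Hq P a c b (of_real y)) has_vector_derivative Hq (Dq a c b P) a c b (of_real x)) (at x)"
  by (rule has_vector_derivative_real_field[OF Hq_deriv])

lemma cderiv_Q: "cderiv n (\<lambda>y. Hq P a c b (of_real y)) = (\<lambda>y. Hq ((Dq a c b ^^ n) P) a c b (of_real y))"
proof (induction n)
  case 0 then show ?case by simp
next
  case (Suc n)
  show ?case by (simp add: Suc vector_derivative_at[OF Q_vderiv])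
qed

lemma norm_Q: "norm (Hq P a c b (of_real y)) = norm (poly P (of_real y)) * exp (- a * y\<^sup>2 + c * y)"
  unfolding Hq_def by (simp add: norm_mult norm_exp_eq_Re)

lemma norm_poly_le: "norm (poly P (of_real y :: complex)) \<le> (\<Sum>i\<le>degree P. norm (coeff P i) * \<bar>y\<bar> ^ i)"
proof -
  have "norm (poly P (of_real y :: complex)) = norm (\<Sum>i\<le>degree P. coeff P i * of_real y ^ i)"
    by (simp add: poly_altdef)
  also have "\<dots> \<le> (\<Sum>i\<le>degree P. norm (coeff P i * of_real y ^ i))" by (rule norm_sum)
  also have "\<dots> = (\<Sum>i\<le>degree P. norm (coeff P i) * \<bar>y\<bar> ^ i)" by (simp add: norm_mult norm_power)
  finally show ?thesis .
qed

lemma Q_decay: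
  assumes a: "a > 0"
  shows "\<exists>B. \<forall>y. \<bar>y\<bar> ^ k * norm (Hq P a c b (of_real y)) \<le> B"
proof -
  have "\<forall>i. \<exists>B. \<forall>y::real. \<bar>y\<bar> ^ (k + i) * exp (- a * y\<^sup>2 + c * y) \<le> B"
    using gauss_decay[OF a] by blast
  then obtain B where B: "\<And>i y. \<bar>y\<bar> ^ (k + i) * exp (- a * y\<^sup>2 + c * y) \<le> B i" by metis
  have "\<bar>y\<bar> ^ k * norm (Hq P a c b (of_real y)) \<le> (\<Sum>i\<le>degree P. norm (coeff P i) * B i)" for y
  proof -
    have "\<bar>y\<bar> ^ k * norm (Hq P a c b (of_real y)) \<le> \<bar>y\<bar> ^ k * ((\<Sum>i\<le>degree P. norm (coeff P i) * \<bar>y\<bar> ^ i) * exp (- a * y\<^sup>2 + c * y))"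
      unfolding norm_Q by (intro mult_left_mono mult_right_mono norm_poly_le) auto
    also have "\<dots> = (\<Sum>i\<le>degree P. norm (coeff P i) * (\<bar>y\<bar> ^ (k + i) * exp (- a * y\<^sup>2 + c * y)))"
      by (simp add: sum_distrib_left sum_distrib_right power_add mult_ac)
    also have "\<dots> \<le> (\<Sum>i\<le>degree P. norm (coeff P i) * B i)"
      by (intro sum_mono mult_left_mono B) auto
    finally show ?thesis .
  qed
  then show ?thesis by blast
qed

lemma schwartz_Q: assumes "a > 0" shows "schwartz (\<lambda>y. Hq P a c b (of_real y))"
  unfolding schwartz_def cderiv_Q
proof (intro conjI allI)
  fix n x show "(\<lambda>y. Hq ((Dq a c b ^^ n) P) a c b (of_real y)) differentiable at x"
    using Q_vderiv differentiableI_vector by blast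
next
  fix n k show "\<exists>B. \<forall>x. \<bar>x\<bar> ^ k * norm (Hq ((Dq a c b ^^ n) P) a c b (of_real x)) \<le> B"
    by (rule Q_decay[OF assms])
qed

lemma cderiv_add:
  assumes "\<And>n x. cderiv n f differentiable at x" "\<And>n x. cderiv n g differentiable at x"
  shows "cderiv n (\<lambda>x. f x + g x) = (\<lambda>x. cderiv n f x + cderiv n g x)"
proof (induction n)
  case 0 then show ?case by simp
next
  case (Suc n) then show ?case using assms by simp
qed

lemma cderiv_cmult:
  assumes "\<And>n x. cderiv n f differentiable at x"
  shows "cderiv n (\<lambda>x. c * f x) = (\<lambda>x. c * cderiv n f x)"
proof (induction n)
  case 0 then show ?case by simp
next
  case (Suc n) then show ?case using assms by simp
qed

lemma schwartz_add: assumes "schwartz f" "schwartz g" shows "schwartz (\<lambda>x. f x + g x)"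
proof -
  have df: "\<And>n x. cderiv n f differentiable at x" and dg: "\<And>n x. cderiv n g differentiable at x"
    using assms by (auto simp: schwartz_def)
  note e = cderiv_add[OF df dg]
  show ?thesis unfolding schwartz_def e
  proof (intro conjI allI)
    fix n x show "(\<lambda>x. cderiv n f x + cderiv n g x) differentiable at x" using df dg by auto
  next
    fix n k
    obtain B1 where B1: "\<forall>x. \<bar>x\<bar> ^ k * norm (cderiv n f x) \<le> B1" using assms unfolding schwartz_def by blast
    obtain B2 where B2: "\<forall>x. \<bar>x\<bar> ^ k * norm (cderiv n g x) \<le> B2" using assms unfolding schwartz_def by blast
    have "\<bar>x\<bar> ^ k * norm (cderiv n f x + cderiv n g x) \<le> B1 + B2" for x
    proof -
      have "\<bar>x\<bar> ^ k * norm (cderiv n f x + cderiv n g x) \<le> \<bar>x\<bar> ^ k * (norm (cderiv n f x) + norm (cderiv n g x))"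
        by (intro mult_left_mono norm_triangle_ineq) auto
      then show ?thesis using B1 B2 by (simp add: algebra_simps) (smt (verit))
    qed
    then show "\<exists>B. \<forall>x. \<bar>x\<bar> ^ k * norm (cderiv n f x + cderiv n g x) \<le> B" by blast
  qed
qed

lemma schwartz_cmult: assumes "schwartz f" shows "schwartz (\<lambda>x. c * f x)"
proof -
  have df: "\<And>n x. cderiv n f differentiable at x" using assms by (auto simp: schwartz_def)
  note e = cderiv_cmult[OF df]
  show ?thesis unfolding schwartz_def e
  proof (intro conjI allI)
    fix n x show "(\<lambda>x. c * cderiv n f x) differentiable at x" using df by auto
  next
    fix n k
    obtain B1 where B1: "\<forall>x. \<bar>x\<bar> ^ k * norm (cderiv n f x) \<le> B1" using assms unfolding schwartz_def by blast
    have "\<bar>x\<bar> ^ k * norm (c * cderiv n f x) \<le> norm c * B1" for x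
      using B1 mult_left_mono[OF spec[OF B1, of x], of "norm c"] by (simp add: norm_mult mult_ac)
    then show "\<exists>B. \<forall>x. \<bar>x\<bar> ^ k * norm (c * cderiv n f x) \<le> B" by blast
  qed
qed

lemma schwartz_zero: "schwartz (\<lambda>x. 0)"
  using schwartz_cmult[OF schwartz_Q[of 1 0 0 0], of 0] by simp

lemma schwartz_sum: "finite A \<Longrightarrow> (\<And>k. k \<in> A \<Longrightarrow> schwartz (f k)) \<Longrightarrow> schwartz (\<lambda>x. \<Sum>k\<in>A. f k x)"
  by (induction A rule: finite_induct) (auto intro: schwartz_add schwartz_zero)



definition Gh :: "real \<Rightarrow> real \<Rightarrow> real" where
  "Gh \<sigma> u = \<sigma> * sqrt (2*pi) * exp (- \<sigma>\<^sup>2 * u\<^sup>2 / 2)"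

definition pc :: "real \<Rightarrow> real \<Rightarrow> complex" where
  "pc s y = complex_of_real (exp (- (y - 0)\<^sup>2 / (2 * (2 * s)\<^sup>2)) - exp (- (y - 0)\<^sup>2 / (2 * s\<^sup>2))) * cis (y / s)"

definition ph :: "real \<Rightarrow> real \<Rightarrow> real" where
  "ph s \<xi> = Gh (2 * s) (\<xi> - 1/s) - Gh s (\<xi> - 1/s)"

lemma integrable_gauss_cis':
  assumes s: "s > 0"
  shows "integrable lborel (\<lambda>y. complex_of_real (exp (- (y - c)\<^sup>2 / (2 * s\<^sup>2))) * cis (- y * t))"
  using integrable_gauss_cis[OF s, of c "- t"] by (simp add: mult.commute)

lemma integrable_pc_cis:
  assumes s: "s > 0" shows "integrable lborel (\<lambda>y. pc s y * cis (- y * \<xi>))"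
proof -
  have "(\<lambda>y. pc s y * cis (- y * \<xi>)) = (\<lambda>y. complex_of_real (exp (- (y - 0)\<^sup>2 / (2 * (2 * s)\<^sup>2))) * cis ((1/s - \<xi>) * y)
     - complex_of_real (exp (- (y - 0)\<^sup>2 / (2 * s\<^sup>2))) * cis ((1/s - \<xi>) * y))"
  proof
    fix y
    have cm: "cis (y / s) * cis (- y * \<xi>) = cis ((1/s - \<xi>) * y)" unfolding cis_mult by (simp add: algebra_simps)
    show "pc s y * cis (- y * \<xi>) = complex_of_real (exp (- (y - 0)\<^sup>2 / (2 * (2 * s)\<^sup>2))) * cis ((1/s - \<xi>) * y)
     - complex_of_real (exp (- (y - 0)\<^sup>2 / (2 * s\<^sup>2))) * cis ((1/s - \<xi>) * y)"
      unfolding pc_def mult.assoc cm by (simp add: algebra_simps)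
  qed
  moreover have "integrable lborel \<dots>"
    using s by (intro Bochner_Integration.integrable_diff integrable_gauss_cis) auto
  ultimately show ?thesis by simp
qed

lemma fourier_pc:
  assumes s: "s > 0" shows "fourier (pc s) \<xi> = complex_of_real (ph s \<xi>)"
proof -
  have eq: "(\<lambda>y. pc s y * cis (- y * \<xi>)) = (\<lambda>y. complex_of_real (exp (- (y - 0)\<^sup>2 / (2 * (2 * s)\<^sup>2))) * cis (- y * (\<xi> - 1/s))
     - complex_of_real (exp (- (y - 0)\<^sup>2 / (2 * s\<^sup>2))) * cis (- y * (\<xi> - 1/s)))"
  proof
    fix y
    have cm: "cis (y / s) * cis (- y * \<xi>) = cis (- y * (\<xi> - 1/s))" unfolding cis_mult by (simp add: algebra_simps)
    show "pc s y * cis (- y * \<xi>) = complex_of_real (exp (- (y - 0)\<^sup>2 / (2 * (2 * s)\<^sup>2))) * cis (- y * (\<xi> - 1/s))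
     - complex_of_real (exp (- (y - 0)\<^sup>2 / (2 * s\<^sup>2))) * cis (- y * (\<xi> - 1/s))"
      unfolding pc_def mult.assoc cm by (simp add: algebra_simps)
  qed
  have "fourier (pc s) \<xi> = (LINT y|lborel. complex_of_real (exp (- (y - 0)\<^sup>2 / (2 * (2 * s)\<^sup>2))) * cis (- y * (\<xi> - 1/s)))
     - (LINT y|lborel. complex_of_real (exp (- (y - 0)\<^sup>2 / (2 * s\<^sup>2))) * cis (- y * (\<xi> - 1/s)))"
    unfolding fourier_def eq
    using s by (intro Bochner_Integration.integral_diff integrable_gauss_cis') auto
  also have "\<dots> = complex_of_real (ph s \<xi>)"
    using s unfolding gauss_ft[OF s] gauss_ft[OF mult_pos_pos[OF zero_less_numeral s]] by (simp add: ph_def Gh_def)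
  finally show ?thesis .
qed



definition Ghd :: "real \<Rightarrow> real \<Rightarrow> real" where
  "Ghd \<sigma> u = \<sigma> * sqrt (2*pi) * (- \<sigma>\<^sup>2 * u) * exp (- \<sigma>\<^sup>2 * u\<^sup>2 / 2)"

lemma Gh_deriv: "DERIV (Gh \<sigma>) u :> Ghd \<sigma> u"
  unfolding Gh_def Ghd_def
  by (auto intro!: derivative_eq_intros simp: algebra_simps power2_eq_square)

lemma Gh_shift_deriv: "DERIV (\<lambda>x. Gh \<sigma> (x - c)) x :> Ghd \<sigma> (x - c)"
proof -
  have "((\<lambda>x. x - c) has_real_derivative 1) (at x)" by (auto intro!: derivative_eq_intros)
  from DERIV_chain2[OF Gh_deriv this] show ?thesis by simp
qed

lemma Gh_nonneg: "\<sigma> \<ge> 0 \<Longrightarrow> Gh \<sigma> u \<ge> 0" by (simp add: Gh_def)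
lemma Gh_le: "\<sigma> \<ge> 0 \<Longrightarrow> Gh \<sigma> u \<le> \<sigma> * sqrt (2*pi)" unfolding Gh_def by (rule mult_left_le) auto
lemma Ghd_nonneg: "\<sigma> \<ge> 0 \<Longrightarrow> u \<le> 0 \<Longrightarrow> Ghd \<sigma> u \<ge> 0"
proof -
  assume "\<sigma> \<ge> 0" "u \<le> 0"
  then have "0 \<le> (- \<sigma>\<^sup>2) * u" by (intro mult_nonpos_nonpos) auto
  then have h: "0 \<le> - \<sigma>\<^sup>2 * u" by simp
  show ?thesis using \<open>\<sigma> \<ge> 0\<close> unfolding Ghd_def by (intro mult_nonneg_nonneg h exp_ge_zero) auto
qed

lemma isCont_Ghd[simp]: "isCont (\<lambda>x. Ghd \<sigma> (x - c)) u" unfolding Ghd_def by (intro continuous_intros) auto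
lemma isCont_Gh[simp]: "isCont (\<lambda>x. Gh \<sigma> (x - c)) u" unfolding Gh_def by (intro continuous_intros) auto

lemma contOn_Ghd[continuous_intros]: "continuous_on S (\<lambda>x. Ghd \<sigma> (x - c))"
  by (intro continuous_at_imp_continuous_on ballI isCont_Ghd)

definition phd :: "real \<Rightarrow> real \<Rightarrow> real" where
  "phd s \<xi> = Ghd (2 * s) (\<xi> - 1/s) - Ghd s (\<xi> - 1/s)"

lemma ph_deriv: "DERIV (ph s) x :> phd s x"
  unfolding ph_def phd_def by (intro derivative_intros Gh_shift_deriv)

lemma osc_finite:
  assumes s: "s > 0" and a: "a \<le> 0"
  shows "\<bar>LINT x|lborel. indicator {a..0} x *\<^sub>R (ph s x * cos (2 * x))\<bar> \<le> 3 * s * sqrt (2*pi)"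
proof -
  have ibp: "(LINT x|lborel. indicator {a..0} x *\<^sub>R (ph s x * cos (2 * x)))
      = ph s 0 * (sin (2 * 0) / 2) - ph s a * (sin (2 * a) / 2) - (LINT x|lborel. indicator {a..0} x *\<^sub>R (phd s x * (sin (2 * x) / 2)))"
    unfolding phd_def
    by (rule integral_by_parts'[OF a]) (auto intro!: continuous_intros derivative_eq_intros ph_deriv[unfolded phd_def])
  have b1: "\<bar>ph s a * (sin (2 * a) / 2)\<bar> \<le> 3 * s * sqrt (2*pi) / 2"
  proof -
    have "\<bar>ph s a\<bar> \<le> 2 * s * sqrt (2*pi) + s * sqrt (2*pi)"
      unfolding ph_def using Gh_le[of "2 * s"] Gh_le[of s] Gh_nonneg[of "2 * s"] Gh_nonneg[of s] s
      by (smt (verit) mult_nonneg_nonneg)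
    moreover have "\<bar>sin (2 * a) / 2\<bar> \<le> 1 / 2" by (simp add: abs_sin_le_one)
    ultimately have "\<bar>ph s a\<bar> * \<bar>sin (2 * a) / 2\<bar> \<le> (3 * s * sqrt (2*pi)) * (1/2)"
      by (intro mult_mono) auto
    then show ?thesis by (simp add: abs_mult)
  qed
  let ?c = "1/s"
  have pw: "\<bar>indicator {a..0} x *\<^sub>R (phd s x * (sin (2 * x) / 2))\<bar>
      \<le> (Ghd (2 * s) (x - ?c) * indicator {a..0} x + Ghd s (x - ?c) * indicator {a..0} x) / 2" for x
  proof (cases "x \<in> {a..0}")
    case True
    moreover have "1/s > 0" using s by simp
    ultimately have xc: "x - ?c \<le> 0" by (simp add: order_trans[of _ 0])
    have n1: "Ghd (2 * s) (x - ?c) \<ge> 0" "Ghd s (x - ?c) \<ge> 0" using Ghd_nonneg xc s by auto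
    have "\<bar>phd s x\<bar> \<le> Ghd (2 * s) (x - ?c) + Ghd s (x - ?c)" unfolding phd_def using n1 by linarith
    moreover have "\<bar>sin (2 * x) / 2\<bar> \<le> 1 / 2" by (simp add: abs_sin_le_one)
    ultimately have "\<bar>phd s x\<bar> * \<bar>sin (2 * x) / 2\<bar> \<le> (Ghd (2 * s) (x - ?c) + Ghd s (x - ?c)) * (1/2)"
      by (intro mult_mono) auto
    then show ?thesis using True by (simp add: abs_mult)
  qed simp
  have int1: "integrable lborel (\<lambda>x. Ghd \<sigma> (x - ?c) * indicator {a..0} x)" for \<sigma>
    by (rule borel_integrable_atLeastAtMost) (auto intro!: continuous_intros)
  have ftc: "(LINT x|lborel. Ghd \<sigma> (x - ?c) * indicator {a..0} x) = Gh \<sigma> (0 - ?c) - Gh \<sigma> (a - ?c)" for \<sigma>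
    by (rule integral_FTC_Icc_real[OF a Gh_shift_deriv]) (auto intro!: continuous_intros)
  have "\<bar>LINT x|lborel. indicator {a..0} x *\<^sub>R (phd s x * (sin (2 * x) / 2))\<bar>
      \<le> (LINT x|lborel. (Ghd (2 * s) (x - ?c) * indicator {a..0} x + Ghd s (x - ?c) * indicator {a..0} x) / 2)"
  proof (rule order_trans[OF integral_abs_bound integral_mono])
    show "integrable lborel (\<lambda>x. \<bar>indicator {a..0} x *\<^sub>R (phd s x * (sin (2 * x) / 2))\<bar>)"
      by (intro integrable_abs borel_integrable_atLeastAtMost'[unfolded set_integrable_def])
        (auto intro!: continuous_intros simp: phd_def)
    show "integrable lborel (\<lambda>x. (Ghd (2 * s) (x - ?c) * indicator {a..0} x + Ghd s (x - ?c) * indicator {a..0} x) / 2)"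
      by (intro integrable_divide Bochner_Integration.integrable_add int1)
  qed (rule pw)
  also have "\<dots> = ((Gh (2 * s) (0 - ?c) - Gh (2 * s) (a - ?c)) + (Gh s (0 - ?c) - Gh s (a - ?c))) / 2"
    by (simp add: Bochner_Integration.integral_add int1 ftc)
  also have "\<dots> \<le> 3 * s * sqrt (2*pi) / 2"
  proof -
    have "Gh (2 * s) (0 - ?c) \<le> 2 * s * sqrt (2*pi)" "Gh s (0 - ?c) \<le> s * sqrt (2*pi)"
      "Gh (2 * s) (a - ?c) \<ge> 0" "Gh s (a - ?c) \<ge> 0"
      using Gh_le Gh_nonneg s by auto
    then show ?thesis by (simp add: field_simps)
  qed
  finally have b2: "\<bar>LINT x|lborel. indicator {a..0} x *\<^sub>R (phd s x * (sin (2 * x) / 2))\<bar> \<le> 3 * s * sqrt (2*pi) / 2" .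
  show ?thesis unfolding ibp using b1 b2 by simp
qed



lemma Gh_as_gauss: "\<sigma> > 0 \<Longrightarrow> Gh \<sigma> (x - c) = \<sigma> * sqrt (2*pi) * exp (- (x - c)\<^sup>2 / (2 * (1/\<sigma>)\<^sup>2))"
  by (simp add: Gh_def power_divide power_mult_distrib field_simps)

lemma integrable_Gh: "\<sigma> > 0 \<Longrightarrow> integrable lborel (\<lambda>x. Gh \<sigma> (x - c))"
  unfolding Gh_as_gauss by (intro integrable_mult_right integrable_gauss) auto

lemma integral_gauss_real:
  assumes s: "s > 0" shows "(LINT y|lborel. exp (- (y - c)\<^sup>2 / (2 * s\<^sup>2))) = s * sqrt (2*pi)"
proof -
  have "complex_of_real (LINT y|lborel. exp (- (y - c)\<^sup>2 / (2 * s\<^sup>2)))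
     = (LINT y|lborel. complex_of_real (exp (- (y - c)\<^sup>2 / (2 * s\<^sup>2))) * cis (- y * 0))"
    by simp
  also have "\<dots> = complex_of_real (s * sqrt (2*pi))" unfolding gauss_ft[OF s] by simp
  finally show ?thesis by (simp only: of_real_eq_iff)
qed

lemma integral_Gh: assumes "\<sigma> > 0" shows "(LINT x|lborel. Gh \<sigma> (x - c)) = 2 * pi"
proof -
  have i: "(LINT x|lborel. exp (- (x - c)\<^sup>2 / (2 * (1/\<sigma>)\<^sup>2))) = (1/\<sigma>) * sqrt (2*pi)"
    using assms by (intro integral_gauss_real) simp
  show ?thesis unfolding Gh_as_gauss[OF assms] integral_mult_right_zero i using assms by simp
qed

lemma integrable_ph: "s > 0 \<Longrightarrow> integrable lborel (ph s)"
  unfolding ph_def by (intro Bochner_Integration.integrable_diff integrable_Gh) auto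

lemma osc:
  assumes s: "s > 0"
  shows "\<bar>LINT x|lborel. indicator {..0} x *\<^sub>R (ph s x * cos (2 * x))\<bar> \<le> 3 * s * sqrt (2*pi)"
proof -
  have si: "set_integrable lborel {..0} (\<lambda>x. ph s x * cos (2 * x))"
    unfolding set_integrable_def
    by (rule Bochner_Integration.integrable_bound[OF integrable_ph[OF s]])
       (auto simp: indicator_def abs_mult intro!: borel_measurable_continuous_onI continuous_intros
         mult_left_le abs_cos_le_one simp: ph_def Gh_def)
  have lim: "((\<lambda>a. set_lebesgue_integral lborel {a..0} (\<lambda>x. ph s x * cos (2 * x))) \<longlongrightarrow>
      set_lebesgue_integral lborel {..0} (\<lambda>x. ph s x * cos (2 * x))) at_bot"
    by (rule tendsto_set_lebesgue_integral_at_bot[OF _ si]) auto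
  then have lim2: "((\<lambda>a. \<bar>set_lebesgue_integral lborel {a..0} (\<lambda>x. ph s x * cos (2 * x))\<bar>) \<longlongrightarrow>
      \<bar>set_lebesgue_integral lborel {..0} (\<lambda>x. ph s x * cos (2 * x))\<bar>) at_bot"
    by (rule tendsto_rabs)
  have ev: "eventually (\<lambda>a. \<bar>set_lebesgue_integral lborel {a..0} (\<lambda>x. ph s x * cos (2 * x))\<bar> \<le> 3 * s * sqrt (2*pi)) at_bot"
    unfolding eventually_at_bot_linorder set_lebesgue_integral_def
    by (intro exI[of _ 0] allI impI osc_finite[OF s])
  have "\<bar>set_lebesgue_integral lborel {..0} (\<lambda>x. ph s x * cos (2 * x))\<bar> \<le> 3 * s * sqrt (2*pi)"
    by (rule tendsto_upperbound[OF lim2 ev]) simp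
  then show ?thesis unfolding set_lebesgue_integral_def .
qed

lemma intind: "A \<in> sets lborel \<Longrightarrow> integrable lborel f \<Longrightarrow> integrable lborel (\<lambda>x. indicator A x * (f x :: real))"
  using integrable_mult_indicator[of A lborel f] by simp

definition c0 :: real where "c0 = exp (-2) * (1 - 2 * exp (- 3/2))"

lemma exp32: "2 * exp (- 3/2 :: real) < 1"
proof -
  have "1 + 3/2 \<le> exp (3/2 :: real)" by (rule exp_ge_add_one_self)
  then have "2 < exp (3/2 :: real)" by simp
  then show ?thesis by (simp add: exp_minus field_simps)
qed

lemma c0_pos: "c0 > 0" unfolding c0_def using exp32 by simp

lemma negD_bounds:
  assumes s: "s > 0" and x: "x \<le> - 1/s"
  shows "Gh s (x - 0) - Gh (2 * s) (x - 0) \<ge> 0"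
    and "x \<ge> - 2/s \<Longrightarrow> Gh s (x - 0) - Gh (2 * s) (x - 0) \<ge> s * sqrt (2*pi) * c0"
proof -
  define t where "t = s\<^sup>2 * x\<^sup>2"
  have "1 \<le> s * (- x)" using s x by (simp add: field_simps)
  then have "1\<^sup>2 \<le> (s * (- x))\<^sup>2" by (intro power_mono) auto
  then have t1: "t \<ge> 1" by (simp add: t_def power_mult_distrib)
  have eq: "Gh s (x - 0) - Gh (2 * s) (x - 0) = s * sqrt (2*pi) * (exp (- t / 2) * (1 - 2 * exp (- 3 * t / 2)))"
  proof -
    have "exp (- ((2 * s)\<^sup>2 * x\<^sup>2) / 2) = exp (- t / 2) * exp (- 3 * t / 2)"
      by (simp add: t_def exp_add[symmetric] power_mult_distrib)
    then show ?thesis by (simp add: Gh_def t_def algebra_simps)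
  qed
  have f1: "1 - 2 * exp (- 3 * t / 2) \<ge> 1 - 2 * exp (- 3/2)" using t1 by simp
  have f2: "1 - 2 * exp (- 3/2) > (0::real)" using exp32 by simp
  have f3: "0 \<le> 1 - 2 * exp (- 3 * t / 2)" using f1 f2 by linarith
  show "Gh s (x - 0) - Gh (2 * s) (x - 0) \<ge> 0" unfolding eq using f3 s
    by (intro mult_nonneg_nonneg) auto
  assume x2: "x \<ge> - 2/s"
  have "s * (- x) \<le> 2" using s x2 by (simp add: field_simps)
  moreover have "0 \<le> s * (- x)"
  proof -
    have "1/s > 0" using s by simp
    then have "x \<le> 0" using x by linarith
    then show ?thesis using s by (simp add: mult_nonneg_nonpos)
  qed
  ultimately have "(s * (- x))\<^sup>2 \<le> 2\<^sup>2" by (intro power_mono) auto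
  then have t4: "t \<le> 4" by (simp add: t_def power_mult_distrib)
  have "exp (-2) \<le> exp (- t / 2)" using t4 by simp
  then have "exp (-2) * (1 - 2 * exp (- 3/2)) \<le> exp (- t / 2) * (1 - 2 * exp (- 3 * t / 2))"
    using f1 f2 by (intro mult_mono) auto
  then show "Gh s (x - 0) - Gh (2 * s) (x - 0) \<ge> s * sqrt (2*pi) * c0"
    unfolding eq c0_def using s by (intro mult_left_mono) auto
qed

lemma main_piece:
  assumes s: "s > 0"
  shows "(LINT x|lborel. indicator {0<..} x * ph s x) \<ge> sqrt (2*pi) * c0"
proof -
  define D where "D x = Gh (2 * s) (x - 0) - Gh s (x - 0)" for x
  have intD: "integrable lborel D" unfolding D_def using s
    by (intro Bochner_Integration.integrable_diff integrable_Gh) auto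
  have s2: "2 * s > 0" using s by simp
  have "(LINT x|lborel. D x) = (LINT x|lborel. Gh (2 * s) (x - 0)) - (LINT x|lborel. Gh s (x - 0))"
    unfolding D_def by (rule Bochner_Integration.integral_diff; rule integrable_Gh; use s in simp)
  also have "\<dots> = 0" by (simp only: integral_Gh[OF s] integral_Gh[OF s2])
  finally have intD0: "(LINT x|lborel. D x) = 0" .
  have "(LINT x|lborel. indicator {0<..} x * ph s x) = \<bar>1\<bar> *\<^sub>R (LINT x|lborel. indicator {0<..} (1/s + 1 * x) * ph s (1/s + 1 * x))"
    by (rule lborel_integral_real_affine) simp
  also have "\<dots> = (LINT x|lborel. indicator {0<..} (1/s + 1 * x) * ph s (1/s + 1 * x))" by simp
  also have "\<dots> = (LINT x|lborel. D x - indicator {..- 1/s} x * D x)"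
  proof (intro Bochner_Integration.integral_cong refl)
    fix x
    have e: "ph s (1/s + 1 * x) = D x" by (simp add: ph_def D_def)
    show "indicator {0<..} (1/s + 1 * x) * ph s (1/s + 1 * x) = D x - indicator {..- 1/s} x * D x"
      unfolding e by (cases "x \<le> - 1/s") (auto simp: indicator_def)
  qed
  also have "\<dots> = - (LINT x|lborel. indicator {..- 1/s} x * D x)"
  proof -
    have "(LINT x|lborel. D x - indicator {..- 1/s} x * D x) = (LINT x|lborel. D x) - (LINT x|lborel. indicator {..- 1/s} x * D x)"
      by (rule Bochner_Integration.integral_diff[OF intD intind[OF _ intD]]) simp
    then show ?thesis using intD0 by simp
  qed
  also have "\<dots> = (LINT x|lborel. indicator {..- 1/s} x * (- D x))" by simp
  finally have I: "(LINT x|lborel. indicator {0<..} x * ph s x) = (LINT x|lborel. indicator {..- 1/s} x * (- D x))" .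
  have "(LINT x|lborel. indicator {- 2/s..- 1/s} x * (s * sqrt (2*pi) * c0)) \<le> (LINT x|lborel. indicator {..- 1/s} x * (- D x))"
  proof (rule integral_mono)
    show "integrable lborel (\<lambda>x. indicator {- 2/s..- 1/s} x * (s * sqrt (2*pi) * c0))"
      using borel_integrable_atLeastAtMost[of "- 2/s" "- 1/s" "\<lambda>x. s * sqrt (2*pi) * c0"] by (simp add: mult.commute)
    show "integrable lborel (\<lambda>x. indicator {..- 1/s} x * (- D x))"
      using intD by (intro intind integrable_minus) auto
    fix x
    show "indicator {- 2/s..- 1/s} x * (s * sqrt (2*pi) * c0) \<le> indicator {..- 1/s} x * (- D x)"
      using negD_bounds[OF s, of x] by (auto simp: indicator_def D_def)
  qed
  also have "(LINT x|lborel. indicator {- 2/s..- 1/s} x * (s * sqrt (2*pi) * c0)) = (1/s) * (s * sqrt (2*pi) * c0)"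
  proof -
    have "(LINT x|lborel. indicator {- 2/s..- 1/s} x * (s * sqrt (2*pi) * c0)) = (LINT x|lborel. indicator {- 2/s..- 1/s} x) * (s * sqrt (2*pi) * c0)"
      by (rule integral_mult_left_zero)
    also have "(LINT x|lborel. indicator {- 2/s..- 1/s} x :: real) = 1/s"
      using s by (simp add: measure_lborel_Icc field_simps)
    finally show ?thesis .
  qed
  also have "\<dots> = sqrt (2*pi) * c0" using s by simp
  finally have "sqrt (2*pi) * c0 \<le> (LINT x|lborel. indicator {..- 1/s} x * (- D x))" .
  then show ?thesis using I by simp
qed



definition sk :: "nat \<Rightarrow> real" where "sk k = 1 / 2 ^ (k + 1)"
lemma sk_pos: "sk k > 0" by (simp add: sk_def)

definition fN :: "nat \<Rightarrow> real \<Rightarrow> complex" where "fN N y = (\<Sum>k<N. pc (sk k) y)"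
definition hN :: "nat \<Rightarrow> real \<Rightarrow> real" where "hN N \<xi> = (\<Sum>k<N. ph (sk k) \<xi>)"

lemma fourier_fN: "fourier (fN N) \<xi> = complex_of_real (hN N \<xi>)"
proof -
  have "fourier (fN N) \<xi> = (LINT y|lborel. (\<Sum>k<N. pc (sk k) y * cis (- y * \<xi>)))"
    unfolding fourier_def fN_def by (simp add: sum_distrib_right)
  also have "\<dots> = (\<Sum>k<N. LINT y|lborel. pc (sk k) y * cis (- y * \<xi>))"
    by (rule Bochner_Integration.integral_sum, rule integrable_pc_cis[OF sk_pos])
  also have "\<dots> = (\<Sum>k<N. complex_of_real (ph (sk k) \<xi>))"
    using fourier_pc[OF sk_pos] unfolding fourier_def by simp
  finally show ?thesis by (simp add: hN_def)
qed

lemma integrable_hN: "integrable lborel (hN N)"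
  unfolding hN_def by (intro Bochner_Integration.integrable_sum integrable_ph sk_pos)

lemma sum_sk: "(\<Sum>k<N. sk k) \<le> 1"
proof -
  have "(\<Sum>k<N. sk k) = 1 - 1 / 2 ^ N" by (induction N) (simp_all add: sk_def field_simps)
  then show ?thesis by simp
qed

lemma integrable_ph_cos:
  assumes s: "s > 0" shows "integrable lborel (\<lambda>\<xi>. ph s \<xi> * cos (\<bar>\<xi>\<bar> - \<xi>))"
proof (rule Bochner_Integration.integrable_bound[OF integrable_ph[OF s]])
  show "(\<lambda>\<xi>. ph s \<xi> * cos (\<bar>\<xi>\<bar> - \<xi>)) \<in> borel_measurable lborel"
    by (auto intro!: borel_measurable_continuous_onI continuous_intros simp: ph_def Gh_def)
  show "AE x in lborel. norm (ph s x * cos (\<bar>x\<bar> - x)) \<le> norm (ph s x)"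
    by (auto simp: abs_mult intro!: mult_left_le abs_cos_le_one)
qed

lemma piece_split:
  assumes s: "s > 0"
  shows "(LINT \<xi>|lborel. ph s \<xi> * cos (\<bar>\<xi>\<bar> - \<xi>)) \<ge> sqrt (2*pi) * c0 - 3 * s * sqrt (2*pi)"
proof -
  have eq: "(\<lambda>\<xi>. ph s \<xi> * cos (\<bar>\<xi>\<bar> - \<xi>)) = (\<lambda>\<xi>. indicator {0<..} \<xi> * ph s \<xi> + indicator {..0} \<xi> *\<^sub>R (ph s \<xi> * cos (2 * \<xi>)))"
    by (auto simp: fun_eq_iff indicator_def)
  have i1: "integrable lborel (\<lambda>\<xi>. indicator {0<..} \<xi> * ph s \<xi>)" by (intro intind integrable_ph s) simp
  have i2: "integrable lborel (\<lambda>\<xi>. indicator {..0} \<xi> *\<^sub>R (ph s \<xi> * cos (2 * \<xi>)))"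
    by (rule Bochner_Integration.integrable_bound[OF integrable_ph[OF s]])
       (auto simp: indicator_def abs_mult intro!: borel_measurable_continuous_onI continuous_intros
         mult_left_le abs_cos_le_one simp: ph_def Gh_def)
  have "(LINT \<xi>|lborel. ph s \<xi> * cos (\<bar>\<xi>\<bar> - \<xi>)) = (LINT \<xi>|lborel. indicator {0<..} \<xi> * ph s \<xi>) + (LINT \<xi>|lborel. indicator {..0} \<xi> *\<^sub>R (ph s \<xi> * cos (2 * \<xi>)))"
    unfolding eq by (rule Bochner_Integration.integral_add[OF i1 i2])
  then show ?thesis using main_piece[OF s] osc[OF s] by linarith
qed

lemma ReF_lower:
  "(LINT \<xi>|lborel. hN N \<xi> * cos (\<bar>\<xi>\<bar> - \<xi>)) \<ge> real N * sqrt (2*pi) * c0 - 3 * sqrt (2*pi)"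
proof -
  have "(LINT \<xi>|lborel. hN N \<xi> * cos (\<bar>\<xi>\<bar> - \<xi>)) = (\<Sum>k<N. LINT \<xi>|lborel. ph (sk k) \<xi> * cos (\<bar>\<xi>\<bar> - \<xi>))"
    unfolding hN_def sum_distrib_right
    by (rule Bochner_Integration.integral_sum, rule integrable_ph_cos[OF sk_pos])
  also have "\<dots> \<ge> (\<Sum>k<N. sqrt (2*pi) * c0 - 3 * sk k * sqrt (2*pi))"
    by (intro sum_mono piece_split sk_pos)
  finally have "(LINT \<xi>|lborel. hN N \<xi> * cos (\<bar>\<xi>\<bar> - \<xi>)) \<ge> real N * sqrt (2*pi) * c0 - 3 * sqrt (2*pi) * (\<Sum>k<N. sk k)"
    by (simp add: sum_subtractf sum_distrib_left sum_distrib_right mult_ac)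
  moreover have "3 * sqrt (2*pi) * (\<Sum>k<N. sk k) \<le> 3 * sqrt (2*pi)"
    using sum_sk[of N] by (simp add: mult_left_le)
  ultimately show ?thesis by linarith
qed



definition FF :: "nat \<Rightarrow> real \<Rightarrow> complex" where
  "FF N x = (LINT \<xi>|lborel. complex_of_real (hN N \<xi>) * cis (x * \<xi> + \<bar>\<xi>\<bar>))"

definition gg :: "real \<Rightarrow> real \<Rightarrow> real \<Rightarrow> complex" where
  "gg x0 w y = complex_of_real (exp (- (y - x0)\<^sup>2 / (2 * w\<^sup>2)))"

lemma cont_hN: "continuous_on A (hN N)"
  unfolding hN_def ph_def Gh_def by (intro continuous_intros) auto

lemma FF_cont: "isCont (FF N) x"
proof (rule continuous_at_sequentiallyI)
  fix u :: "nat \<Rightarrow> real" assume u: "u \<longlonglongrightarrow> x"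
  show "(\<lambda>n. FF N (u n)) \<longlonglongrightarrow> FF N x"
    unfolding FF_def
  proof (rule integral_dominated_convergence[where w = "\<lambda>\<xi>. \<bar>hN N \<xi>\<bar>"])
    show "(\<lambda>\<xi>. complex_of_real (hN N \<xi>) * cis (x * \<xi> + \<bar>\<xi>\<bar>)) \<in> borel_measurable lborel"
      by (auto intro!: borel_measurable_continuous_onI continuous_intros cont_hN)
    show "(\<lambda>\<xi>. complex_of_real (hN N \<xi>) * cis (u i * \<xi> + \<bar>\<xi>\<bar>)) \<in> borel_measurable lborel" for i
      by (auto intro!: borel_measurable_continuous_onI continuous_intros cont_hN)
    show "integrable lborel (\<lambda>\<xi>. \<bar>hN N \<xi>\<bar>)" by (intro integrable_abs integrable_hN)
    show "AE \<xi> in lborel. (\<lambda>i. complex_of_real (hN N \<xi>) * cis (u i * \<xi> + \<bar>\<xi>\<bar>)) \<longlonglongrightarrow> complex_of_real (hN N \<xi>) * cis (x * \<xi> + \<bar>\<xi>\<bar>)"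
      using u by (intro AE_I2 tendsto_intros)
    show "AE \<xi> in lborel. norm (complex_of_real (hN N \<xi>) * cis (u i * \<xi> + \<bar>\<xi>\<bar>)) \<le> \<bar>hN N \<xi>\<bar>" for i
      by (simp add: norm_mult)
  qed
qed

lemma FF_bound: "norm (FF N x) \<le> (LINT \<xi>|lborel. \<bar>hN N \<xi>\<bar>)"
proof -
  have "norm (FF N x) \<le> (LINT \<xi>|lborel. norm (complex_of_real (hN N \<xi>) * cis (x * \<xi> + \<bar>\<xi>\<bar>)))"
    unfolding FF_def by (rule integral_norm_bound)
  also have "\<dots> = (LINT \<xi>|lborel. \<bar>hN N \<xi>\<bar>)" by (simp add: norm_mult)
  finally show ?thesis .
qed

lemma ReFF: "Re (FF N (-1)) = (LINT \<xi>|lborel. hN N \<xi> * cos (\<bar>\<xi>\<bar> - \<xi>))"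
proof -
  have int: "integrable lborel (\<lambda>\<xi>. complex_of_real (hN N \<xi>) * cis (-1 * \<xi> + \<bar>\<xi>\<bar>))"
    by (rule Bochner_Integration.integrable_bound[OF integrable_hN])
       (auto intro!: borel_measurable_continuous_onI continuous_intros cont_hN simp: norm_mult)
  have "Re (FF N (-1)) = (LINT \<xi>|lborel. Re (complex_of_real (hN N \<xi>) * cis (-1 * \<xi> + \<bar>\<xi>\<bar>)))"
    unfolding FF_def by (rule integral_Re[OF int, symmetric])
  also have "\<dots> = (LINT \<xi>|lborel. hN N \<xi> * cos (\<bar>\<xi>\<bar> - \<xi>))" by simp
  finally show ?thesis .
qed

lemma fourier_gg: "w > 0 \<Longrightarrow> fourier (gg x0 w) \<eta> = complex_of_real (w * sqrt (2*pi) * exp (- w\<^sup>2 * \<eta>\<^sup>2 / 2)) * cis (- x0 * \<eta>)"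
  unfolding fourier_def gg_def by (rule gauss_ft)

lemma inner_gg:
  assumes w: "w > 0"
  shows "(LINT \<eta>|lborel. fourier (gg x0 w) \<eta> * cis (x * \<eta>)) = 2 * pi * gg x0 w x"
proof -
  have w': "1 / w > 0" using w by simp
  have pw: "fourier (gg x0 w) \<eta> * cis (x * \<eta>) = complex_of_real (w * sqrt (2*pi)) *
      (complex_of_real (exp (- (\<eta> - 0)\<^sup>2 / (2 * (1/w)\<^sup>2))) * cis (- \<eta> * (x0 - x)))" for \<eta>
  proof -
    have "cis (- x0 * \<eta>) * cis (x * \<eta>) = cis (- \<eta> * (x0 - x))" unfolding cis_mult by (simp add: algebra_simps)
    moreover have "exp (- w\<^sup>2 * \<eta>\<^sup>2 / 2) = exp (- (\<eta> - 0)\<^sup>2 / (2 * (1/w)\<^sup>2))"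
      using w by (simp add: power_divide field_simps)
    ultimately show ?thesis unfolding fourier_gg[OF w] by (simp add: mult_ac)
  qed
  have "(LINT \<eta>|lborel. fourier (gg x0 w) \<eta> * cis (x * \<eta>)) = complex_of_real (w * sqrt (2*pi)) *
      (LINT \<eta>|lborel. complex_of_real (exp (- (\<eta> - 0)\<^sup>2 / (2 * (1/w)\<^sup>2))) * cis (- \<eta> * (x0 - x)))"
    unfolding pw by (rule integral_mult_right_zero)
  also have "\<dots> = complex_of_real (w * sqrt (2*pi)) * (complex_of_real ((1/w) * sqrt (2*pi) * exp (- (1/w)\<^sup>2 * (x0 - x)\<^sup>2 / 2)) * cis (- 0 * (x0 - x)))"
    unfolding gauss_ft[OF w'] ..
  also have "\<dots> = complex_of_real (w * sqrt (2*pi) * ((1/w) * sqrt (2*pi) * exp (- (1/w)\<^sup>2 * (x0 - x)\<^sup>2 / 2)))"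
    by simp
  also have "w * sqrt (2*pi) * ((1/w) * sqrt (2*pi) * exp (- (1/w)\<^sup>2 * (x0 - x)\<^sup>2 / 2)) = 2 * pi * exp (- (x - x0)\<^sup>2 / (2 * w\<^sup>2))"
  proof -
    have "sqrt (2*pi) * sqrt (2*pi) = 2 * pi" by simp
    moreover have "- (1/w)\<^sup>2 * (x0 - x)\<^sup>2 / 2 = - (x - x0)\<^sup>2 / (2 * w\<^sup>2)"
      using w by (simp add: power_divide power2_commute)
    ultimately show ?thesis using w by (simp add: field_simps)
  qed
  also have "complex_of_real (2 * pi * exp (- (x - x0)\<^sup>2 / (2 * w\<^sup>2))) = 2 * pi * gg x0 w x"
    by (simp add: gg_def)
  finally show ?thesis .
qed

lemma T_op_eq:
  assumes w: "w > 0"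
  shows "T_op chi (fN N) (gg x0 w) x = complex_of_real (chi x) * gg x0 w x * FF N x / (2 * pi)"
proof -
  have inner: "(LINT \<eta>|lborel. complex_of_real (chi x) * fourier (fN N) \<xi> * fourier (gg x0 w) \<eta>
      * cis ((x * \<xi> + \<bar>\<xi>\<bar>) + x * \<eta>) / (2 * pi)\<^sup>2)
     = (complex_of_real (chi x) * complex_of_real (hN N \<xi>) * cis (x * \<xi> + \<bar>\<xi>\<bar>) / (2 * pi)\<^sup>2) * (2 * pi * gg x0 w x)" for \<xi>
  proof -
    have "(LINT \<eta>|lborel. complex_of_real (chi x) * fourier (fN N) \<xi> * fourier (gg x0 w) \<eta>
      * cis ((x * \<xi> + \<bar>\<xi>\<bar>) + x * \<eta>) / (2 * pi)\<^sup>2)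
      = (LINT \<eta>|lborel. (complex_of_real (chi x) * complex_of_real (hN N \<xi>) * cis (x * \<xi> + \<bar>\<xi>\<bar>) / (2 * pi)\<^sup>2) * (fourier (gg x0 w) \<eta> * cis (x * \<eta>)))"
      by (intro Bochner_Integration.integral_cong refl) (simp add: fourier_fN cis_mult[symmetric] mult_ac)
    also have "\<dots> = (complex_of_real (chi x) * complex_of_real (hN N \<xi>) * cis (x * \<xi> + \<bar>\<xi>\<bar>) / (2 * pi)\<^sup>2) * (LINT \<eta>|lborel. fourier (gg x0 w) \<eta> * cis (x * \<eta>))"
      by (rule integral_mult_right_zero)
    finally show ?thesis unfolding inner_gg[OF w] .
  qed
  have "T_op chi (fN N) (gg x0 w) x = (LINT \<xi>|lborel. (complex_of_real (chi x) / (2 * pi)\<^sup>2 * (2 * pi * gg x0 w x)) * (complex_of_real (hN N \<xi>) * cis (x * \<xi> + \<bar>\<xi>\<bar>)))"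
    unfolding T_op_def inner by (intro Bochner_Integration.integral_cong refl) (simp add: mult_ac)
  also have "\<dots> = (complex_of_real (chi x) / (2 * pi)\<^sup>2 * (2 * pi * gg x0 w x)) * FF N x"
    unfolding FF_def by (rule integral_mult_right_zero)
  also have "\<dots> = complex_of_real (chi x) * gg x0 w x * FF N x / (2 * pi)"
    by (simp add: power2_eq_square field_simps)
  finally show ?thesis .
qed



lemma Hq_real: "Hq 1 a c b (of_real y) = complex_of_real (exp (- a * y\<^sup>2 + c * y)) * cis (b * y)"
proof -
  have "- of_real a * (of_real y)\<^sup>2 + (of_real c + \<i> * of_real b) * of_real y
      = complex_of_real (- a * y\<^sup>2 + c * y) + \<i> * complex_of_real (b * y)"
    by (simp add: algebra_simps)
  then have "Hq 1 a c b (of_real y) = exp (complex_of_real (- a * y\<^sup>2 + c * y) + \<i> * complex_of_real (b * y))"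
    unfolding Hq_def poly_1 mult_1 by (rule arg_cong[where f=exp])
  also have "\<dots> = exp (complex_of_real (- a * y\<^sup>2 + c * y)) * exp (\<i> * complex_of_real (b * y))"
    by (rule exp_add)
  also have "\<dots> = complex_of_real (exp (- a * y\<^sup>2 + c * y)) * cis (b * y)"
    by (simp only: exp_of_real cis_conv_exp)
  finally show ?thesis .
qed

lemma schwartz_gauss_mod:
  assumes a: "a > 0" shows "schwartz (\<lambda>y. complex_of_real (exp (- a * y\<^sup>2 + c * y)) * cis (b * y))"
  using schwartz_Q[OF a, of 1 c b] unfolding Hq_real .

lemma schwartz_pc: assumes s: "s > 0" shows "schwartz (pc s)"
proof -
  have eq: "pc s = (\<lambda>y. complex_of_real (exp (- (1 / (2 * (2 * s)\<^sup>2)) * y\<^sup>2 + 0 * y)) * cis ((1/s) * y)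
      + (- 1) * (complex_of_real (exp (- (1 / (2 * s\<^sup>2)) * y\<^sup>2 + 0 * y)) * cis ((1/s) * y)))"
    by (auto simp: fun_eq_iff pc_def algebra_simps)
  show ?thesis unfolding eq
    by (intro schwartz_add schwartz_cmult schwartz_gauss_mod) (use s in auto)
qed

lemma schwartz_fN: "schwartz (fN N)"
proof -
  have "schwartz (\<lambda>y. \<Sum>k<N. pc (sk k) y)" by (intro schwartz_sum schwartz_pc sk_pos) auto
  then show ?thesis unfolding fN_def[abs_def] .
qed

lemma schwartz_gg: assumes w: "w > 0" shows "schwartz (gg x0 w)"
proof -
  have eq: "gg x0 w = (\<lambda>y. complex_of_real (exp (- x0\<^sup>2 / (2 * w\<^sup>2))) *
     (complex_of_real (exp (- (1 / (2 * w\<^sup>2)) * y\<^sup>2 + (x0 / w\<^sup>2) * y)) * cis (0 * y)))"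
  proof
    fix y
    have "- (y - x0)\<^sup>2 / (2 * w\<^sup>2) = - x0\<^sup>2 / (2 * w\<^sup>2) + (- (1 / (2 * w\<^sup>2)) * y\<^sup>2 + (x0 / w\<^sup>2) * y)"
      using w by (simp add: field_simps power2_eq_square)
    then have e2: "exp (- (y - x0)\<^sup>2 / (2 * w\<^sup>2)) = exp (- x0\<^sup>2 / (2 * w\<^sup>2)) * exp (- (1 / (2 * w\<^sup>2)) * y\<^sup>2 + (x0 / w\<^sup>2) * y)"
      unfolding exp_add[symmetric] by simp
    show "gg x0 w y = complex_of_real (exp (- x0\<^sup>2 / (2 * w\<^sup>2))) *
     (complex_of_real (exp (- (1 / (2 * w\<^sup>2)) * y\<^sup>2 + (x0 / w\<^sup>2) * y)) * cis (0 * y))"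
      unfolding gg_def e2 by simp
  qed
  show ?thesis unfolding eq by (intro schwartz_cmult schwartz_gauss_mod) (use w in simp)
qed

lemma norm_fN_le: "norm (fN N y) \<le> 1"
proof -
  define e where "e j = exp (- y\<^sup>2 / (2 * (1 / 2 ^ j)\<^sup>2))" for j :: nat
  have two: "2 * sk k = 1 / 2 ^ k" for k by (simp add: sk_def)
  have pcn: "norm (pc (sk k) y) = e k - e (Suc k)" for k
  proof -
    have "e (Suc k) \<le> e k" unfolding e_def by (simp add: field_simps)
    moreover have pe: "pc (sk k) y = complex_of_real (e k - e (Suc k)) * cis (y / sk k)"
      unfolding pc_def e_def two by (simp add: sk_def)
    ultimately show ?thesis unfolding pe norm_mult norm_of_real norm_cis by simp
  qed
  have "norm (fN N y) \<le> (\<Sum>k<N. norm (pc (sk k) y))" unfolding fN_def by (rule norm_sum)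
  also have "\<dots> = (\<Sum>k<N. e k - e (Suc k))" by (simp add: pcn)
  also have "\<dots> = e 0 - e N" by (rule sum_lessThan_telescope')
  also have "\<dots> \<le> 1"
  proof -
    have "e 0 \<le> 1" "e N \<ge> 0" unfolding e_def by simp_all
    then show ?thesis by linarith
  qed
  finally show ?thesis .
qed

lemma sup_norm_fN: "sup_norm (fN N) \<le> 1" "sup_norm (fN N) \<ge> 0"
proof -
  show "sup_norm (fN N) \<le> 1" unfolding sup_norm_def by (rule cSUP_least) (auto intro: norm_fN_le)
  have bdd: "bdd_above (range (\<lambda>x. norm (fN N x)))" by (rule bdd_aboveI2[where M=1]) (rule norm_fN_le)
  have "norm (fN N 0) \<le> (SUP x. norm (fN N x))" by (rule cSUP_upper[OF UNIV_I bdd])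
  then have "norm (fN N 0) \<le> sup_norm (fN N)" by (simp add: sup_norm_def)
  then show "sup_norm (fN N) \<ge> 0" using norm_ge_zero[of "fN N 0"] by linarith
qed



lemma chi_cont: assumes "smooth_real chi" shows "isCont chi x"
proof -
  have "((deriv ^^ 0) chi) differentiable (at x)" using assms unfolding smooth_real_def by blast
  then have "chi differentiable (at x)" by simp
  then show ?thesis by (rule differentiable_imp_continuous_within)
qed

lemma chi_bound:
  assumes sm: "smooth_real chi" and cl: "closure {x. chi x \<noteq> 0} \<subseteq> {-2<..<2}"
  shows "\<exists>B. \<forall>x. \<bar>chi x\<bar> \<le> B"
proof -
  have "continuous_on {-2..2} chi" using chi_cont[OF sm] by (intro continuous_at_imp_continuous_on) auto
  then have "compact (chi ` {-2..2})" by (intro compact_continuous_image) auto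
  then have "bounded (chi ` {-2..2})" by (rule compact_imp_bounded)
  then obtain B where B: "\<And>y. y \<in> chi ` {-2..2} \<Longrightarrow> \<bar>y\<bar> \<le> B" unfolding bounded_real by blast
  have "\<bar>chi x\<bar> \<le> max B 0" for x
  proof (cases "x \<in> {-2..2}")
    case True then show ?thesis using B[of "chi x"] by auto
  next
    case False
    then have "x \<notin> closure {x. chi x \<noteq> 0}" using cl by auto
    then have "x \<notin> {x. chi x \<noteq> 0}" using closure_subset[of "{x. chi x \<noteq> 0}"] by (meson subsetD)
    then have "chi x = 0" by simp
    then show ?thesis by simp
  qed
  then show ?thesis by blast
qed

lemma norm_gg: "norm (gg x0 w y) = exp (- (y - x0)\<^sup>2 / (2 * w\<^sup>2))"
  by (simp add: gg_def)

lemma gg_powr: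
  assumes w: "w > 0" and p: "p > 0"
  shows "norm (gg x0 w y) powr p = exp (- (y - x0)\<^sup>2 / (2 * (w / sqrt p)\<^sup>2))"
proof -
  have a: "(w / sqrt p)\<^sup>2 = w\<^sup>2 / p" using p by (simp add: power_divide)
  have b: "- (y - x0)\<^sup>2 / (2 * w\<^sup>2) * p = - (y - x0)\<^sup>2 / (2 * (w\<^sup>2 / p))"
    using w p by (simp add: divide_simps)
  show ?thesis unfolding norm_gg exp_powr_real a b ..
qed

lemma Lp_gg:
  assumes w: "w > 0" and p: "p > 0"
  shows "Lp_norm p (gg x0 w) = ((w / sqrt p) * sqrt (2*pi)) powr (1/p)"
proof -
  have "w / sqrt p > 0" using w p by simp
  then have "(LINT y|lborel. exp (- (y - x0)\<^sup>2 / (2 * (w / sqrt p)\<^sup>2))) = (w / sqrt p) * sqrt (2*pi)"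
    by (rule integral_gauss_real)
  then show ?thesis unfolding Lp_norm_def gg_powr[OF w p] by simp
qed

lemma cont_gg: "w > 0 \<Longrightarrow> isCont (gg x0 w) x"
  unfolding gg_def by (intro continuous_intros) auto



theorem proposition5p3:
  fixes chi :: "real \<Rightarrow> real" and p :: real
  assumes "smooth_real chi"
    and "closure {x. chi x \<noteq> 0} \<subseteq> {-2<..<2}"
    and "\<forall>x\<in>{-1..1}. chi x = 1"
    and "\<forall>x. chi (- x) = chi x"
    and "1 < p"
  shows "\<not> (\<exists>C. \<forall>f g. schwartz f \<longrightarrow> schwartz g \<longrightarrow>
            Lp_norm p (T_op chi f g) \<le> C * sup_norm f * Lp_norm p g)"
proof
  assume "\<exists>C. \<forall>f g. schwartz f \<longrightarrow> schwartz g \<longrightarrow> Lp_norm p (T_op chi f g) \<le> C * sup_norm f * Lp_norm p g"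
  then obtain C where Cb: "\<And>f g. schwartz f \<Longrightarrow> schwartz g \<Longrightarrow> Lp_norm p (T_op chi f g) \<le> C * sup_norm f * Lp_norm p g"
    by blast
  have p0: "p > 0" using assms(5) by simp
  define K where "K = max C 0"
  have K0: "K \<ge> 0" and CK: "C \<le> K" by (auto simp: K_def)
  obtain Bc where Bc: "\<And>x. \<bar>chi x\<bar> \<le> Bc" using chi_bound[OF assms(1,2)] by blast
  have chi1: "\<And>x. -1 \<le> x \<Longrightarrow> x \<le> 1 \<Longrightarrow> chi x = 1" using assms(3) by auto
  have sp: "sqrt (2*pi) * c0 > 0" using c0_pos by simp
  obtain N :: nat where N: "(12 * pi * exp (1/2) * K + 3 * sqrt (2*pi)) / (sqrt (2*pi) * c0) < real N"
    using reals_Archimedean2 by blast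
  have NL: "real N * sqrt (2*pi) * c0 - 3 * sqrt (2*pi) > 12 * pi * exp (1/2) * K"
    using N sp by (simp add: divide_less_eq mult_ac)
  define M0 where "M0 = Re (FF N (-1))"
  have M0: "M0 > 12 * pi * exp (1/2) * K"
    using NL ReF_lower[of N] unfolding M0_def ReFF by linarith
  have M0pos: "M0 > 0" using M0 K0 by (smt (verit) mult_nonneg_nonneg pi_gt_zero exp_gt_zero)
  have nF0: "norm (FF N (-1)) \<ge> M0" unfolding M0_def by (rule complex_Re_le_cmod)
  obtain \<delta> where \<delta>: "\<delta> > 0" and \<delta>b: "\<And>x. x \<noteq> -1 \<and> norm (x - (-1)) < \<delta> \<Longrightarrow> norm (FF N x - FF N (-1)) < M0 / 2"
    using LIM_D[OF FF_cont[unfolded isCont_def], of "M0/2" "-1" N] M0pos by auto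
  have FFlow: "norm (FF N x) \<ge> M0 / 2" if "\<bar>x + 1\<bar> < \<delta>" for x
  proof (cases "x = -1")
    case True then show ?thesis using nF0 M0pos by simp
  next
    case False
    then have "norm (FF N x - FF N (-1)) < M0 / 2" using \<delta>b[of x] that by simp
    moreover have "norm (FF N (-1)) \<le> norm (FF N x) + norm (FF N x - FF N (-1))"
      by (metis norm_minus_commute norm_triangle_sub)
    ultimately show ?thesis using nF0 by linarith
  qed
  define d where "d = min \<delta> 1"
  have d0: "d > 0" "d \<le> 1" "d \<le> \<delta>" using \<delta> by (auto simp: d_def)
  define x0 where "x0 = -1 + d / 2"
  define w where "w = d / 4"
  have w0: "w > 0" using d0 by (simp add: w_def)
  define T where "T = T_op chi (fN N) (gg x0 w)"
  have Teq: "T x = complex_of_real (chi x) * gg x0 w x * FF N x / (2 * pi)" for x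
    unfolding T_def by (rule T_op_eq[OF w0])
  define m where "m = exp (- 1/2) * (M0 / 2) / (2 * pi)"
  have m0: "m > 0" using M0pos by (simp add: m_def)
  have m3K: "m > 3 * K"
  proof -
    have "12 * pi * K < exp (- 1/2) * M0"
    proof -
      have ee: "exp (1/2) * exp (- 1/2) = (1::real)" using exp_add[of "1/2" "- 1/2"] by simp
      have eq: "12 * pi * exp (1/2) * K * exp (- 1/2) = 12 * pi * K"
        using ee by (metis (no_types, opaque_lifting) mult.assoc mult.commute mult.right_neutral)
      have lt: "12 * pi * exp (1/2) * K * exp (- 1/2) < M0 * exp (- 1/2)"
        using M0 by (intro mult_strict_right_mono) auto
      from eq lt have "12 * pi * K < M0 * exp (- 1/2)" by linarith
      then show ?thesis by (simp add: mult.commute)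
    qed
    then show ?thesis unfolding m_def by (simp add: field_simps)
  qed
  define W where "W = {x0 - w .. x0 + w}"
  have Tlow: "norm (T x) \<ge> m" if "x \<in> W" for x
  proof -
    have xr: "-1 \<le> x" "x \<le> 1" "\<bar>x + 1\<bar> < \<delta>" using that d0 by (auto simp: W_def x0_def w_def)
    have "\<bar>x - x0\<bar> \<le> w" using that by (auto simp: W_def)
    then have "\<bar>x - x0\<bar>\<^sup>2 \<le> w\<^sup>2" by (intro power_mono) auto
    then have "(x - x0)\<^sup>2 \<le> w\<^sup>2" by simp
    then have "(x - x0)\<^sup>2 / (2 * w\<^sup>2) \<le> 1/2" using w0 by (simp add: divide_simps)
    then have g: "norm (gg x0 w x) \<ge> exp (- 1/2)" unfolding norm_gg by simp
    have "norm (T x) = norm (gg x0 w x) * norm (FF N x) / (2 * pi)"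
      unfolding Teq using chi1[OF xr(1,2)] by (simp add: norm_mult norm_divide)
    also have "\<dots> \<ge> exp (- 1/2) * (M0 / 2) / (2 * pi)"
      using g FFlow[OF xr(3)] M0pos by (intro divide_right_mono mult_mono) auto
    finally show ?thesis unfolding m_def .
  qed
  define BF where "BF = (LINT \<xi>|lborel. \<bar>hN N \<xi>\<bar>)"
  have Tup: "norm (T x) \<le> (\<bar>Bc\<bar> * BF / (2 * pi)) * exp (- (x - x0)\<^sup>2 / (2 * w\<^sup>2))" for x
  proof -
    have "norm (T x) = \<bar>chi x\<bar> * norm (FF N x) / (2 * pi) * exp (- (x - x0)\<^sup>2 / (2 * w\<^sup>2))"
      unfolding Teq by (simp add: norm_mult norm_divide norm_gg)
    also have "\<dots> \<le> \<bar>Bc\<bar> * BF / (2 * pi) * exp (- (x - x0)\<^sup>2 / (2 * w\<^sup>2))"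
      using Bc[of x] FF_bound[of N x] unfolding BF_def
      by (intro mult_right_mono divide_right_mono mult_mono) auto
    finally show ?thesis .
  qed
  have Tcont: "continuous_on UNIV T"
    unfolding Teq[abs_def]
    by (intro continuous_at_imp_continuous_on ballI continuous_intros cont_gg[OF w0] FF_cont
        isCont_o2[of _ chi complex_of_real, OF chi_cont[OF assms(1)]]) auto
  have Tmeas: "(\<lambda>x. norm (T x) powr p) \<in> borel_measurable lborel"
    using borel_measurable_continuous_onI[OF Tcont] by measurable
  define A where "A = \<bar>Bc\<bar> * BF / (2 * pi)"
  have A0: "A \<ge> 0" unfolding A_def BF_def by (auto intro!: integral_nonneg_AE)
  have Tint: "integrable lborel (\<lambda>x. norm (T x) powr p)"
  proof (rule Bochner_Integration.integrable_bound)
    show "integrable lborel (\<lambda>x. A powr p * exp (- (x - x0)\<^sup>2 / (2 * (w / sqrt p)\<^sup>2)))"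
      using w0 p0 by (intro integrable_mult_right integrable_gauss) auto
    show "(\<lambda>x. norm (T x) powr p) \<in> borel_measurable lborel" by (rule Tmeas)
    show "AE x in lborel. norm (norm (T x) powr p) \<le> norm (A powr p * exp (- (x - x0)\<^sup>2 / (2 * (w / sqrt p)\<^sup>2)))"
    proof (intro AE_I2)
      fix x
      have "norm (T x) powr p \<le> (A * norm (gg x0 w x)) powr p"
        using Tup[of x] p0 unfolding A_def norm_gg by (intro powr_mono2) auto
      also have "\<dots> = A powr p * exp (- (x - x0)\<^sup>2 / (2 * (w / sqrt p)\<^sup>2))"
        using A0 by (simp add: powr_mult gg_powr[OF w0 p0])
      finally show "norm (norm (T x) powr p) \<le> norm (A powr p * exp (- (x - x0)\<^sup>2 / (2 * (w / sqrt p)\<^sup>2)))"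
        by simp
    qed
  qed
  have intlow: "(LINT x|lborel. norm (T x) powr p) \<ge> 2 * w * m powr p"
  proof -
    have "(LINT x|lborel. indicator W x * m powr p) \<le> (LINT x|lborel. norm (T x) powr p)"
    proof (rule integral_mono)
      show "integrable lborel (\<lambda>x. indicator W x * m powr p)"
        unfolding W_def using borel_integrable_atLeastAtMost[of "x0 - w" "x0 + w" "\<lambda>x. m powr p"] by (simp add: mult.commute)
      show "integrable lborel (\<lambda>x. norm (T x) powr p)" by (rule Tint)
      fix x show "indicator W x * m powr p \<le> norm (T x) powr p"
        using Tlow[of x] m0 p0 by (cases "x \<in> W") (auto intro!: powr_mono2)
    qed
    also have "(LINT x|lborel. indicator W x * m powr p) = 2 * w * m powr p"
      using w0 by (simp add: W_def measure_lborel_Icc)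
    finally show ?thesis .
  qed
  have LpT: "Lp_norm p T \<ge> w powr (1/p) * m"
  proof -
    have "(2 * w * m powr p) powr (1/p) \<le> (LINT x|lborel. norm (T x) powr p) powr (1/p)"
      using intlow w0 m0 p0 by (intro powr_mono2) auto
    moreover have "(2 * w * m powr p) powr (1/p) = 2 powr (1/p) * w powr (1/p) * m"
      using w0 m0 p0 by (simp add: powr_mult powr_powr)
    moreover have "2 powr (1/p) \<ge> 1" using p0 by (intro ge_one_powr_ge_zero) auto
    moreover have "w powr (1/p) * m \<ge> 0" using m0 by simp
    ultimately have "w powr (1/p) * m \<le> (LINT x|lborel. norm (T x) powr p) powr (1/p)"
      using mult_right_mono[of 1 "2 powr (1/p)" "w powr (1/p) * m"] by (simp add: mult.assoc)
    then show ?thesis unfolding Lp_norm_def .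
  qed
  have Lpg: "Lp_norm p (gg x0 w) \<le> 3 * w powr (1/p)"
  proof -
    have "(w / sqrt p) * sqrt (2*pi) \<le> 3 * w"
    proof -
      have "sqrt p \<ge> 1" using assms(5) by simp
      then have "w / sqrt p \<le> w" using w0 by (simp add: divide_le_eq mult_le_cancel_left1)
      moreover have "sqrt (2*pi) \<le> 3"
      proof -
        have "2 * pi \<le> 3\<^sup>2" using pi_less_4 by simp
        then have "sqrt (2 * pi) \<le> sqrt (3\<^sup>2)" by (rule real_sqrt_le_mono)
        then show ?thesis by simp
      qed
      ultimately have "w / sqrt p * sqrt (2*pi) \<le> w * 3" using w0 p0 by (intro mult_mono) auto
      then show ?thesis by (simp add: mult.commute)
    qed
    then have "Lp_norm p (gg x0 w) \<le> (3 * w) powr (1/p)"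
      unfolding Lp_gg[OF w0 p0] using w0 p0 by (intro powr_mono2) auto
    also have "\<dots> = 3 powr (1/p) * w powr (1/p)" using w0 by (simp add: powr_mult)
    also have "3 powr (1/p) \<le> (3::real) powr 1" using assms(5) by (intro powr_mono) auto
    then have "3 powr (1/p) * w powr (1/p) \<le> 3 * w powr (1/p)" by (intro mult_right_mono) auto
    finally show ?thesis .
  qed
  have Lpg0: "Lp_norm p (gg x0 w) \<ge> 0" unfolding Lp_gg[OF w0 p0] by simp
  have "Lp_norm p T \<le> C * sup_norm (fN N) * Lp_norm p (gg x0 w)"
    unfolding T_def by (rule Cb[OF schwartz_fN schwartz_gg[OF w0]])
  also have "C * sup_norm (fN N) \<le> K"
  proof -
    have "C * sup_norm (fN N) \<le> K * sup_norm (fN N)" using CK sup_norm_fN by (intro mult_right_mono) auto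
    also have "\<dots> \<le> K" using K0 sup_norm_fN by (simp add: mult_left_le)
    finally show ?thesis .
  qed
  then have "C * sup_norm (fN N) * Lp_norm p (gg x0 w) \<le> K * Lp_norm p (gg x0 w)"
    using Lpg0 by (intro mult_right_mono) auto
  also have "\<dots> \<le> K * (3 * w powr (1/p))" using K0 Lpg by (intro mult_left_mono) auto
  finally have up: "Lp_norm p T \<le> 3 * K * w powr (1/p)" by simp
  have "w powr (1/p) > 0" using w0 by simp
  then have "3 * K * w powr (1/p) < m * w powr (1/p)" using m3K by (intro mult_strict_right_mono) auto
  then show False using up LpT by (simp add: mult.commute)
qed


end
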